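(* There exist infinitely many graphs $G$ that are locally Ore and satisfy $\lambda(G) \ne \delta(G)$.
   Context: $\lambda(G)$ is the edge-connectivity and $\delta(G)$ the minimum degree of $G$. A graph $G$ is locally Ore if for every vertex $v \in V(G)$ and every pair $u,w$ of non-adjacent vertices in $N(v)$, $\deg_{\langle N(v)\rangle}(u) + \deg_{\langle N(v)\rangle}(w) \ge \deg_G(v)$, where $N(v)$ is the open neighbourhood of $v$ and $\langle N(v)\rangle$ the subgraph induced by it. *)

theory Defs
  imports Main
begin

text \<open>A finite simple graph: a pair (V, E) of a finite vertex set and a set of
  2-element edges inside V. Vertices are natural numbers (any finite graph is
  isomorphic to one of these).\<close>

type_synonym ugraph = "nat set \<times> nat set set"

definition verts :: "ugraph \<Rightarrow> nat set" where "verts G = fst G"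
definition edges :: "ugraph \<Rightarrow> nat set set" where "edges G = snd G"

definition finite_simple_graph :: "ugraph \<Rightarrow> bool" where
  "finite_simple_graph G \<longleftrightarrow> finite (verts G) \<and>
     (\<forall>e\<in>edges G. \<exists>u v. e = {u, v} \<and> u \<noteq> v \<and> u \<in> verts G \<and> v \<in> verts G)"

definition nbhd :: "ugraph \<Rightarrow> nat \<Rightarrow> nat set" where
  "nbhd G v = {u \<in> verts G. {u, v} \<in> edges G}"

definition degree :: "ugraph \<Rightarrow> nat \<Rightarrow> nat" where
  "degree G v = card (nbhd G v)"

definition min_degree :: "ugraph \<Rightarrow> nat" where
  "min_degree G = Min (degree G ` verts G)"

definition connected :: "ugraph \<Rightarrow> bool" where
  "connected G \<longleftrightarrow> (\<forall>u\<in>verts G. \<forall>v\<in>verts G.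
     (u, v) \<in> {(x, y). {x, y} \<in> edges G}\<^sup>*)"

definition edge_connectivity :: "ugraph \<Rightarrow> nat" where
  "edge_connectivity G = (LEAST k. \<exists>F \<subseteq> edges G. card F = k \<and>
      \<not> connected (verts G, edges G - F))"

definition local_degree :: "ugraph \<Rightarrow> nat \<Rightarrow> nat \<Rightarrow> nat" where
  "local_degree G v u = card {x \<in> nbhd G v. {u, x} \<in> edges G}"

definition locally_ore :: "ugraph \<Rightarrow> bool" where
  "locally_ore G \<longleftrightarrow> (\<forall>v\<in>verts G. \<forall>u\<in>nbhd G v. \<forall>w\<in>nbhd G v.
     u \<noteq> w \<longrightarrow> {u, w} \<notin> edges G \<longrightarrow>
     local_degree G v u + local_degree G v w \<ge> degree G v)"

definition graph_iso :: "ugraph \<Rightarrow> ugraph \<Rightarrow> bool" where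
  "graph_iso G H \<longleftrightarrow> (\<exists>f. bij_betw f (verts G) (verts H) \<and>
     (\<forall>u\<in>verts G. \<forall>v\<in>verts G. {u, v} \<in> edges G \<longleftrightarrow> {f u, f v} \<in> edges H))"

end

theory Submission imports Defs begin


definition CC :: "nat \<Rightarrow> nat set" where "CC n = {0,1,2,n,n+1,n+2}"
definition adj :: "nat \<Rightarrow> nat \<Rightarrow> nat \<Rightarrow> bool" where
  "adj n u v \<longleftrightarrow> u \<noteq> v \<and> u < 2*n \<and> v < 2*n \<and> ((u < n) = (v < n) \<or> (u \<in> CC n \<and> v \<in> CC n))"
definition GG :: "nat \<Rightarrow> ugraph" where
  "GG n = ({0..<2*n}, {{u,v} | u v. adj n u v})"

lemma verts_pair[simp]: "verts (V,E) = V" by (simp add: verts_def)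
lemma edges_pair[simp]: "edges (V,E) = E" by (simp add: edges_def)

lemma adj_sym: "adj n u v = adj n v u" unfolding adj_def by auto

lemma verts_GG[simp]: "verts (GG n) = {0..<2*n}" by (simp add: GG_def verts_def)

lemma edge_GG[simp]: "{x,y} \<in> edges (GG n) \<longleftrightarrow> adj n x y"
proof
  assume "{x,y} \<in> edges (GG n)"
  then obtain u v where "{x,y} = {u,v}" "adj n u v" by (auto simp: GG_def edges_def)
  then show "adj n x y" by (metis adj_sym doubleton_eq_iff)
qed (auto simp: GG_def edges_def)

lemma nbhd_GG: "nbhd (GG n) v = {u. adj n u v}"
  unfolding nbhd_def by (auto simp: adj_def)

lemma fsg: "finite_simple_graph (GG n)"
  unfolding finite_simple_graph_def by (auto simp: GG_def edges_def verts_def adj_def)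

lemma conn: assumes "n \<ge> 3" shows "connected (GG n)"
proof -
  let ?R = "{(x, y). {x, y} \<in> edges (GG n)}"
  have r0: "(u,0) \<in> ?R\<^sup>*" if "u < 2*n" for u
  proof (cases "u = 0")
    case False
    show ?thesis
    proof (cases "u < n")
      case True
      then have "(u,0) \<in> ?R" using False that by (auto simp: adj_def)
      then show ?thesis by blast
    next
      case f2: False
      have a: "(n,0) \<in> ?R" using assms by (auto simp: adj_def CC_def)
      show ?thesis
      proof (cases "u = n")
        case True then show ?thesis using a by blast
      next
        case False
        then have "(u,n) \<in> ?R" using f2 that assms by (auto simp: adj_def)
        then show ?thesis using a by (meson converse_rtrancl_into_rtrancl r_into_rtrancl)
      qed
    qed
  qed simp
  have sym: "(x,y) \<in> ?R\<^sup>* \<Longrightarrow> (y,x) \<in> ?R\<^sup>*" for x y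
  proof (induction rule: rtrancl_induct)
    case (step y z)
    then have "(z,y) \<in> ?R" using adj_sym by simp
    then show ?case using step by (meson converse_rtrancl_into_rtrancl)
  qed simp
  show ?thesis unfolding connected_def
  proof (intro ballI)
    fix u v assume "u \<in> verts (GG n)" "v \<in> verts (GG n)"
    then have "(u,0) \<in> ?R\<^sup>*" "(0,v) \<in> ?R\<^sup>*" using r0 sym by auto
    then show "(u,v) \<in> ?R\<^sup>*" by (rule rtrancl_trans)
  qed
qed

lemma deg_ge: assumes "v < 2*n" shows "degree (GG n) v \<ge> n - 1"
proof -
  let ?S = "{y. y < 2*n \<and> (y < n) = (v < n)} - {v}"
  have "?S \<subseteq> nbhd (GG n) v" using assms by (auto simp: nbhd_GG adj_def)
  moreover have "finite (nbhd (GG n) v)"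
    by (rule finite_subset[of _ "{..<2*n}"]) (auto simp: nbhd_GG adj_def)
  ultimately have "card ?S \<le> degree (GG n) v" unfolding degree_def by (rule card_mono[rotated])
  moreover have "card ?S = n - 1"
  proof (cases "v < n")
    case True
    then have "?S = {0..<n} - {v}" by auto
    then show ?thesis using True by simp
  next
    case False
    then have "?S = {n..<2*n} - {v}" using assms by auto
    then show ?thesis using False assms by simp
  qed
  ultimately show ?thesis by simp
qed

lemma mindeg: assumes "n \<ge> 11" shows "min_degree (GG n) \<ge> 10"
proof -
  have "finite (degree (GG n) ` verts (GG n))" by simp
  moreover have "degree (GG n) ` verts (GG n) \<noteq> {}" using assms by simp
  moreover have "\<forall>d \<in> degree (GG n) ` verts (GG n). d \<ge> 10"
    using deg_ge assms by fastforce
  ultimately show ?thesis unfolding min_degree_def by simp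
qed

lemma ec: assumes "n \<ge> 11" shows "edge_connectivity (GG n) \<le> 9"
proof -
  define F where "F = (\<lambda>(a,b). {a,b::nat}) ` ({0,1,2} \<times> {n,n+1,n+2})"
  have cF: "card F \<le> 9" unfolding F_def
    by (rule order.trans[OF card_image_le]) (auto simp: card_cartesian_product)
  have Fsub: "F \<subseteq> edges (GG n)" unfolding F_def using assms
    by (auto simp: adj_def CC_def)
  let ?R = "{(x, y). {x, y} \<in> edges (GG n) - F}"
  have inv: "(x,y) \<in> ?R\<^sup>* \<Longrightarrow> (x < n) = (y < n)" for x y
  proof (induction rule: rtrancl_induct)
    case (step y z)
    then have "adj n y z" "{y,z} \<notin> F" by auto
    have "(y < n) = (z < n)"
    proof (rule ccontr)
      assume d: "(y < n) \<noteq> (z < n)"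
      then have yz: "y \<in> CC n" "z \<in> CC n" using \<open>adj n y z\<close> unfolding adj_def by auto
      show False
      proof (cases "y < n")
        case True
        then have "y \<in> {0,1,2}" "z \<in> {n,n+1,n+2}" using yz d assms unfolding CC_def by auto
        then have "{y,z} \<in> F" unfolding F_def by (intro image_eqI[of _ _ "(y,z)"]) auto
        then show False using \<open>{y,z} \<notin> F\<close> by simp
      next
        case False
        then have "z \<in> {0,1,2}" "y \<in> {n,n+1,n+2}" using yz d assms unfolding CC_def by auto
        then have "{z,y} \<in> F" unfolding F_def by (intro image_eqI[of _ _ "(z,y)"]) auto
        then show False using \<open>{y,z} \<notin> F\<close> by (simp add: insert_commute)
      qed
    qed
    then show ?case using step by simp
  qed simp
  have "\<not> connected (verts (GG n), edges (GG n) - F)"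
    unfolding connected_def
  proof
    assume "\<forall>u\<in>verts (verts (GG n), edges (GG n) - F). \<forall>v\<in>verts (verts (GG n), edges (GG n) - F).
     (u, v) \<in> {(x, y). {x, y} \<in> edges (verts (GG n), edges (GG n) - F)}\<^sup>*"
    then have "(0,n) \<in> ?R\<^sup>*" using assms by (simp only: verts_pair edges_pair verts_GG) simp
    then show False using inv[of 0 n] assms by simp
  qed
  then have "edge_connectivity (GG n) \<le> card F" unfolding edge_connectivity_def
    using Fsub by (intro Least_le) blast
  then show ?thesis using cF by simp
qed


lemma fin_nb: "finite {y. adj n y v}"
  by (rule finite_subset[of _ "{..<2*n}"]) (auto simp: adj_def)

lemma cardS: "card ({y. y < 2*n \<and> (y < n) = (v < n)} - A) = n - card A"
  if "A \<subseteq> {y. y < 2*n \<and> (y < n) = (v < n)}" "v < 2*n" for A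
proof -
  have "card {y. y < 2*n \<and> (y < n) = (v < n)} = n"
  proof (cases "v < n")
    case True then have "{y. y < 2*n \<and> (y < n) = (v < n)} = {0..<n}" by auto
    then show ?thesis by simp
  next
    case False then have "{y. y < 2*n \<and> (y < n) = (v < n)} = {n..<2*n}" by auto
    then show ?thesis by simp
  qed
  moreover have "finite A"
    by (rule finite_subset[OF that(1)], rule finite_subset[of _ "{..<2*n}"]) auto
  ultimately show ?thesis using that by (simp add: card_Diff_subset)
qed

lemma key:
  assumes n: "n \<ge> 11" and v: "v \<in> CC n" and b: "b \<in> CC n" "(b < n) \<noteq> (v < n)"
    and x: "x \<notin> CC n" "(x < n) = (v < n)" "x < 2*n"
  shows "local_degree (GG n) v b + local_degree (GG n) v x \<ge> degree (GG n) v"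
proof -
  let ?S = "{y. y < 2*n \<and> (y < n) = (v < n)}"
  have v2: "v < 2*n" using v n by (auto simp: CC_def)
  define T where "T = (if v < n then {n,n+1,n+2} else {0,1,2::nat})"
  have cT: "card T \<le> 3" unfolding T_def using n by auto
  have "nbhd (GG n) v \<subseteq> (?S - {v}) \<union> T"
    using n unfolding nbhd_GG adj_def T_def CC_def by auto
  then have "degree (GG n) v \<le> card ((?S - {v}) \<union> T)"
    unfolding degree_def by (rule card_mono[rotated]) (auto simp: T_def)
  also have "\<dots> \<le> card (?S - {v}) + card T" by (rule card_Un_le)
  also have "card (?S - {v}) = n - 1" using cardS[of "{v}" n v] v2 by simp
  finally have d: "degree (GG n) v \<le> n + 2" using cT n by simp
  have "?S - {v,x} \<subseteq> {y \<in> nbhd (GG n) v. {x, y} \<in> edges (GG n)}"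
    using x v2 unfolding nbhd_GG by (auto simp: adj_def)
  then have "card (?S - {v,x}) \<le> local_degree (GG n) v x"
    unfolding local_degree_def by (rule card_mono[rotated]) (auto intro: finite_subset[OF _ fin_nb] simp: nbhd_GG)
  moreover have "card (?S - {v,x}) = n - 2" using cardS[of "{v,x}" n v] v2 x v by (auto simp: card_insert_if)
  ultimately have lx: "local_degree (GG n) v x \<ge> n - 2" by simp
  have "CC n - {v,b} \<subseteq> {y \<in> nbhd (GG n) v. {b, y} \<in> edges (GG n)}"
    proof
    fix y assume y: "y \<in> CC n - {v,b}"
    have "y < 2*n" "v < 2*n" "b < 2*n" using y v b n by (auto simp: CC_def)
    then show "y \<in> {y \<in> nbhd (GG n) v. {b, y} \<in> edges (GG n)}"
      using y v b unfolding nbhd_GG by (auto simp: adj_def)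
  qed
  then have "card (CC n - {v,b}) \<le> local_degree (GG n) v b"
    unfolding local_degree_def by (rule card_mono[rotated]) (auto intro: finite_subset[OF _ fin_nb] simp: nbhd_GG)
  moreover have "card (CC n - {v,b}) = 4"
  proof -
    have "card (CC n) = 6" using n by (simp add: CC_def)
    moreover have "card {v,b} = 2" using b by auto
    ultimately show ?thesis using v b by (simp add: card_Diff_subset)
  qed
  ultimately have lb: "local_degree (GG n) v b \<ge> 4" by simp
  show ?thesis using d lx lb n by linarith
qed

lemma lore: assumes n: "n \<ge> 11" shows "locally_ore (GG n)"
  unfolding locally_ore_def
proof (intro ballI impI)
  fix v u w assume "v \<in> verts (GG n)" "u \<in> nbhd (GG n) v" "w \<in> nbhd (GG n) v" "u \<noteq> w"
    "{u, w} \<notin> edges (GG n)"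
  then have uv: "adj n u v" and wv: "adj n w v" and uw: "\<not> adj n u w" by (auto simp: nbhd_GG)
  show "local_degree (GG n) v u + local_degree (GG n) v w \<ge> degree (GG n) v"
  proof (cases "(u < n) = (v < n)")
    case True
    then have "w \<in> CC n" "v \<in> CC n" "(w < n) \<noteq> (v < n)" "u \<notin> CC n" "u < 2*n"
      using uv wv uw \<open>u \<noteq> w\<close> unfolding adj_def by auto
    then show ?thesis using key[OF n, of v w u] True by simp
  next
    case False
    then have "u \<in> CC n" "v \<in> CC n" "(w < n) = (v < n)" "w \<notin> CC n" "w < 2*n"
      using uv wv uw \<open>u \<noteq> w\<close> unfolding adj_def by auto
    then show ?thesis using key[OF n, of v u w] False by simp
  qed
qed


lemma GG_inj: "GG n = GG m \<Longrightarrow> n = m"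
proof -
  assume "GG n = GG m"
  then have "card (verts (GG n)) = card (verts (GG m))" by simp
  then show "n = m" by simp
qed

theorem mainTheorem11:
  shows "\<exists>S :: ugraph set. infinite S \<and>
    (\<forall>G\<in>S. finite_simple_graph G \<and> connected G \<and> locally_ore G \<and>
              edge_connectivity G \<noteq> min_degree G) \<and>
    (\<forall>G\<in>S. \<forall>H\<in>S. G \<noteq> H \<longrightarrow> \<not> graph_iso G H)"
proof (intro exI[of _ "GG ` {11..}"] conjI ballI impI)
  have "inj_on GG {11..}" by (auto intro: inj_onI GG_inj)
  then show "infinite (GG ` {11..})" using infinite_Ici by (auto dest: finite_imageD)
next
  fix G assume "G \<in> GG ` {11..}"
  then obtain n where n: "n \<ge> 11" "G = GG n" by auto
  show "finite_simple_graph G" using n fsg by simp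
  show "connected G" using n conn by simp
  show "locally_ore G" using n lore by simp
  show "edge_connectivity G \<noteq> min_degree G" using n ec mindeg by fastforce
next
  fix G H assume "G \<in> GG ` {11..}" "H \<in> GG ` {11..}" "G \<noteq> H"
  then obtain n m where G: "G = GG n" and H: "H = GG m" and "n \<noteq> m" by auto
  show "\<not> graph_iso G H"
  proof
    assume "graph_iso G H"
    then obtain f where "bij_betw f (verts G) (verts H)" unfolding graph_iso_def by blast
    then have "card (verts G) = card (verts H)" by (rule bij_betw_same_card)
    then show False using G H \<open>n \<noteq> m\<close> by simp
  qed
qed

end
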